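(* Let $V=\{1,\dots,n\}$ be a finite set of banks and $E$ a finite set of edges $e$ with source $s(e)\in V$ and target $t(e)\in V$, each carrying a nominal obligation $\ell_e\in[0,\infty)$; let $\iota_v\in[0,\infty)$ be the external assets of bank $v$, $\bar\ell_v=\sum_{e\in E,\,s(e)=v}\ell_e$, and $\pi_e=\ell_e/\bar\ell_{s(e)}$. Form the lattice liability network on the augmented quiver with edge set $E\cup\{e_v^{\mathrm{in}},e_v^{\mathrm{out}}:v\in V\}$ (each $e_v^{\mathrm{in}},e_v^{\mathrm{out}}$ a self-loop at $v$), where $L_v=[0,\infty]$, $\ell_{e_v^{\mathrm{in}}}=\iota_v$, $\ell_{e_v^{\mathrm{out}}}=\infty$, the distributor is $[D_v(x_v)]_e=\pi_e\min\{x_v,\bar\ell_v\}$ for $e\in E$ with $s(e)=v$, $[D_v(x_v)]_{e_v^{\mathrm{in}}}=\iota_v$, $[D_v(x_v)]_{e_v^{\mathrm{out}}}=\max\{0,x_v-\bar\ell_v\}$, the pay-out aggregator $B_v$ sums the components on edges in $E$ out of $v$ and on $e_v^{\mathrm{out}}$ (ignoring $e_v^{\mathrm{in}}$), and the pay-in aggregator is $A_v\big((p_e)_{e\in t^{-1}(v)}\big)=p_{e_v^{\mathrm{in}}}+\sum_{e\in E,\,t(e)=v}p_e$ (ignoring $e_v^{\mathrm{out}}$). Then the clearing sections of this network correspond precisely (one-to-one) to the Eisenberg–Noe clearing payment vectors, i.e. to the vectors $\mathbf{q}\in\prod_{v}[0,\bar\ell_v]$ satisfying $q_v=\min\{\bar\ell_v,\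 \iota_v+\sum_{e\in E,\,t(e)=v}\pi_e\, q_{s(e)}\}$ for all $v\in V$.
   Context: For $\mathbf{x}=(x_v)\in\prod_v[0,\infty]$, the edge payment on an edge $e$ (of the augmented quiver) is $p_e=[D_{s(e)}(x_{s(e)})]_e$, and $\mathbf{x}$ is a clearing section if $x_v=A_v\big((p_e)_{e:\,t(e)=v}\big)$ for every $v$, where the edges into $v$ include the self-loops $e_v^{\mathrm{in}},e_v^{\mathrm{out}}$. The quantities $\pi_e$ are used only for edges whose source has $\bar\ell_{s(e)}>0$. *)

theory Defs
  imports "HOL-Analysis.Analysis" "HOL-Library.FuncSet"
begin

text \<open>Edges of the augmented quiver: original edges, and the two self-loops
  e_v^in and e_v^out at each bank v.\<close>
datatype ('e, 'v) aedge = Orig 'e | EIn 'v | EOut 'v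

definition lbar :: "'e set \<Rightarrow> ('e \<Rightarrow> 'v) \<Rightarrow> ('e \<Rightarrow> real) \<Rightarrow> 'v \<Rightarrow> real" where
  "lbar E s l v = (\<Sum>e\<in>{e\<in>E. s e = v}. l e)"

text \<open>Relative liabilities (only meaningful when lbar of the source is positive).\<close>
definition relpi :: "'e set \<Rightarrow> ('e \<Rightarrow> 'v) \<Rightarrow> ('e \<Rightarrow> real) \<Rightarrow> 'e \<Rightarrow> real" where
  "relpi E s l e = l e / lbar E s l (s e)"

fun asrc :: "('e \<Rightarrow> 'v) \<Rightarrow> ('e, 'v) aedge \<Rightarrow> 'v" where
  "asrc s (Orig e) = s e"
| "asrc s (EIn v) = v"
| "asrc s (EOut v) = v"

text \<open>Distributor D_v : [0,\<infinity>] \<rightarrow> product over edges out of v (edges not out of v get 0).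
  In ennreal, x - c is the truncated difference max{0, x - c}.\<close>
fun distr :: "'e set \<Rightarrow> ('e \<Rightarrow> 'v) \<Rightarrow> ('e \<Rightarrow> real) \<Rightarrow> ('v \<Rightarrow> real)
      \<Rightarrow> 'v \<Rightarrow> ennreal \<Rightarrow> ('e, 'v) aedge \<Rightarrow> ennreal" where
  "distr E s l \<iota> v x (Orig e) =
     (if e \<in> E \<and> s e = v then ennreal (relpi E s l e) * min x (ennreal (lbar E s l v)) else 0)"
| "distr E s l \<iota> v x (EIn w) = (if w = v then ennreal (\<iota> v) else 0)"
| "distr E s l \<iota> v x (EOut w) = (if w = v then x - ennreal (lbar E s l v) else 0)"

definition payin :: "'e set \<Rightarrow> ('e \<Rightarrow> 'v) \<Rightarrow> 'v \<Rightarrow> (('e, 'v) aedge \<Rightarrow> ennreal) \<Rightarrow> ennreal" where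
  "payin E t v p = p (EIn v) + (\<Sum>e\<in>{e\<in>E. t e = v}. p (Orig e))"

text \<open>Pay-out aggregator B_v (ignores e_v^in); part of the network data, not used
  in the clearing condition.\<close>
definition payout :: "'e set \<Rightarrow> ('e \<Rightarrow> 'v) \<Rightarrow> 'v \<Rightarrow> (('e, 'v) aedge \<Rightarrow> ennreal) \<Rightarrow> ennreal" where
  "payout E s v p = p (EOut v) + (\<Sum>e\<in>{e\<in>E. s e = v}. p (Orig e))"

definition edge_payment :: "'e set \<Rightarrow> ('e \<Rightarrow> 'v) \<Rightarrow> ('e \<Rightarrow> real) \<Rightarrow> ('v \<Rightarrow> real)
      \<Rightarrow> ('v \<Rightarrow> ennreal) \<Rightarrow> ('e, 'v) aedge \<Rightarrow> ennreal" where
  "edge_payment E s l \<iota> x e = distr E s l \<iota> (asrc s e) (x (asrc s e)) e"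

definition clearing_sections :: "'v set \<Rightarrow> 'e set \<Rightarrow> ('e \<Rightarrow> 'v) \<Rightarrow> ('e \<Rightarrow> 'v)
      \<Rightarrow> ('e \<Rightarrow> real) \<Rightarrow> ('v \<Rightarrow> real) \<Rightarrow> ('v \<Rightarrow> ennreal) set" where
  "clearing_sections V E s t l \<iota> =
     {x \<in> V \<rightarrow>\<^sub>E (UNIV :: ennreal set).
        \<forall>v\<in>V. x v = payin E t v (edge_payment E s l \<iota> x)}"

definition EN_clearing_vectors :: "'v set \<Rightarrow> 'e set \<Rightarrow> ('e \<Rightarrow> 'v) \<Rightarrow> ('e \<Rightarrow> 'v)
      \<Rightarrow> ('e \<Rightarrow> real) \<Rightarrow> ('v \<Rightarrow> real) \<Rightarrow> ('v \<Rightarrow> real) set" where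
  "EN_clearing_vectors V E s t l \<iota> =
     {q \<in> (\<Pi>\<^sub>E v\<in>V. {0 .. lbar E s l v}).
        \<forall>v\<in>V. q v = min (lbar E s l v)
                 (\<iota> v + (\<Sum>e\<in>{e\<in>E. t e = v}. relpi E s l e * q (s e)))}"

end

theory Submission
  imports Defs
begin

lemma lbar_nonneg: "\<forall>e\<in>E. 0 \<le> l e \<Longrightarrow> 0 \<le> lbar E s l v"
  unfolding lbar_def by (rule sum_nonneg) auto

lemma relpi_nonneg: "\<forall>e\<in>E. 0 \<le> l e \<Longrightarrow> e \<in> E \<Longrightarrow> 0 \<le> relpi E s l e"
  unfolding relpi_def using lbar_nonneg[of E l s "s e"] by auto

lemma min_fin: "0 \<le> c \<Longrightarrow> min y (ennreal c) = ennreal (enn2real (min y (ennreal c)))"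
  by (metis ennreal_enn2real ennreal_less_top min.cobounded2 order_le_less_trans)

lemma enn2real_min: "0 \<le> a \<Longrightarrow> 0 \<le> b \<Longrightarrow> enn2real (min (ennreal a) (ennreal b)) = min a b"
  by (simp add: min_ennreal)

lemma payin_eq:
  assumes "finite E" "\<forall>e\<in>E. 0 \<le> l e" "0 \<le> \<iota> v"
  shows "payin E t v (edge_payment E s l \<iota> x) =
    ennreal (\<iota> v + (\<Sum>e\<in>{e\<in>E. t e = v}. relpi E s l e *
        enn2real (min (x (s e)) (ennreal (lbar E s l (s e))))))"
proof -
  have "(\<Sum>e\<in>{e\<in>E. t e = v}. edge_payment E s l \<iota> x (Orig e)) =
        (\<Sum>e\<in>{e\<in>E. t e = v}. ennreal (relpi E s l e *
        enn2real (min (x (s e)) (ennreal (lbar E s l (s e))))))"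
  proof (rule sum.cong)
    fix e assume "e \<in> {e\<in>E. t e = v}"
    hence e: "e \<in> E" by auto
    have "edge_payment E s l \<iota> x (Orig e) = ennreal (relpi E s l e) * min (x (s e)) (ennreal (lbar E s l (s e)))"
      unfolding edge_payment_def using e by simp
    also have "\<dots> = ennreal (relpi E s l e) * ennreal (enn2real (min (x (s e)) (ennreal (lbar E s l (s e)))))"
      using min_fin[OF lbar_nonneg[OF assms(2)]] by metis
    also have "\<dots> = ennreal (relpi E s l e *
        enn2real (min (x (s e)) (ennreal (lbar E s l (s e)))))"
      by (rule ennreal_mult[symmetric]) (use relpi_nonneg[OF assms(2) e] in auto)
    finally show "edge_payment E s l \<iota> x (Orig e) = \<dots>" .
  qed simp
  also have "\<dots> = ennreal (\<Sum>e\<in>{e\<in>E. t e = v}. relpi E s l e *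
        enn2real (min (x (s e)) (ennreal (lbar E s l (s e)))))"
    by (rule sum_ennreal) (use relpi_nonneg[OF assms(2)] in \<open>auto intro!: mult_nonneg_nonneg\<close>)
  finally have S: "(\<Sum>e\<in>{e\<in>E. t e = v}. edge_payment E s l \<iota> x (Orig e)) =
        ennreal (\<Sum>e\<in>{e\<in>E. t e = v}. relpi E s l e *
        enn2real (min (x (s e)) (ennreal (lbar E s l (s e)))))" .
  have nn: "0 \<le> (\<Sum>e\<in>{e\<in>E. t e = v}. relpi E s l e *
        enn2real (min (x (s e)) (ennreal (lbar E s l (s e)))))"
    by (auto intro!: sum_nonneg mult_nonneg_nonneg relpi_nonneg[OF assms(2)])
  have EI: "edge_payment E s l \<iota> x (EIn v) = ennreal (\<iota> v)"
    unfolding edge_payment_def by simp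
  show ?thesis
    unfolding payin_def S EI by (rule ennreal_plus[OF assms(3) nn, symmetric])
qed

theorem corollary2:
  fixes n :: nat and E :: "'e set" and s t :: "'e \<Rightarrow> nat"
    and l :: "'e \<Rightarrow> real" and \<iota> :: "nat \<Rightarrow> real"
  assumes "finite E"
    and "\<forall>e\<in>E. s e \<in> {1..n} \<and> t e \<in> {1..n}"
    and "\<forall>e\<in>E. 0 \<le> l e"
    and "\<forall>v\<in>{1..n}. 0 \<le> \<iota> v"
  shows "bij_betw (\<lambda>x. \<lambda>v\<in>{1..n}. enn2real (min (x v) (ennreal (lbar E s l v))))
           (clearing_sections {1..n} E s t l \<iota>)
           (EN_clearing_vectors {1..n} E s t l \<iota>)"
proof -
  let ?V = "{1..n}"
  let ?L = "lbar E s l"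
  let ?p = "relpi E s l"
  define F where "F = (\<lambda>x. \<lambda>v\<in>?V. enn2real (min (x v) (ennreal (?L v))))"
  define r where "r = (\<lambda>q v. \<iota> v + (\<Sum>e\<in>{e\<in>E. t e = v}. ?p e * q (s e)))"
  define G where "G = (\<lambda>q. \<lambda>v\<in>?V. ennreal (r q v))"
  have Lnn: "\<And>v. 0 \<le> ?L v" by (rule lbar_nonneg[OF assms(3)])
  have pnn: "\<And>e. e \<in> E \<Longrightarrow> 0 \<le> ?p e" using relpi_nonneg[OF assms(3)] by auto
  have Fnn: "\<And>x v. v \<in> ?V \<Longrightarrow> 0 \<le> F x v" unfolding F_def by auto
  have PI: "\<And>x v. v \<in> ?V \<Longrightarrow> payin E t v (edge_payment E s l \<iota> x) = ennreal (r (F x) v)"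
  proof -
    fix x v assume v: "v \<in> ?V"
    have "(\<Sum>e\<in>{e\<in>E. t e = v}. ?p e * enn2real (min (x (s e)) (ennreal (?L (s e))))) =
          (\<Sum>e\<in>{e\<in>E. t e = v}. ?p e * F x (s e))"
      by (rule sum.cong) (use assms(2) in \<open>auto simp: F_def\<close>)
    thus "payin E t v (edge_payment E s l \<iota> x) = ennreal (r (F x) v)"
      using payin_eq[OF assms(1) assms(3), of \<iota> v t s x] assms(4) v unfolding r_def by simp
  qed
  have rnn: "\<And>q v. v \<in> ?V \<Longrightarrow> (\<And>w. w \<in> ?V \<Longrightarrow> 0 \<le> q w) \<Longrightarrow> 0 \<le> r q v"
    unfolding r_def using assms(4) pnn assms(2) by (auto intro!: add_nonneg_nonneg sum_nonneg mult_nonneg_nonneg)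
  show ?thesis
    unfolding F_def[symmetric]
  proof (rule bij_betw_byWitness[where f'=G])
    show "\<forall>x\<in>clearing_sections ?V E s t l \<iota>. G (F x) = x"
    proof
      fix x assume x: "x \<in> clearing_sections ?V E s t l \<iota>"
      show "G (F x) = x"
      proof
        fix v show "G (F x) v = x v"
          using x PI[of v x] unfolding clearing_sections_def G_def
          by (auto simp: PiE_def extensional_def)
      qed
    qed
    show "\<forall>q\<in>EN_clearing_vectors ?V E s t l \<iota>. F (G q) = q"
    proof
      fix q assume q: "q \<in> EN_clearing_vectors ?V E s t l \<iota>"
      have qnn: "\<And>w. w \<in> ?V \<Longrightarrow> 0 \<le> q w"
        using q unfolding EN_clearing_vectors_def by (auto simp: PiE_iff)
      show "F (G q) = q"
      proof
        fix v show "F (G q) v = q v"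
        proof (cases "v \<in> ?V")
          case True
          have "F (G q) v = min (r q v) (?L v)"
            unfolding F_def G_def using True enn2real_min[OF rnn[OF True qnn] Lnn] by simp
          also have "\<dots> = q v" using q True unfolding EN_clearing_vectors_def r_def
            by (simp add: min.commute)
          finally show ?thesis .
        next
          case False
          thus ?thesis using q unfolding EN_clearing_vectors_def F_def
            by (auto simp: PiE_def extensional_def)
        qed
      qed
    qed
    show "F ` clearing_sections ?V E s t l \<iota> \<subseteq> EN_clearing_vectors ?V E s t l \<iota>"
    proof
      fix y assume "y \<in> F ` clearing_sections ?V E s t l \<iota>"
      then obtain x where x: "x \<in> clearing_sections ?V E s t l \<iota>" and y: "y = F x" by auto
      have xv: "\<And>v. v \<in> ?V \<Longrightarrow> x v = ennreal (r (F x) v)"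
        using x PI unfolding clearing_sections_def by auto
      have bnd: "\<And>v. v \<in> ?V \<Longrightarrow> F x v \<le> ?L v"
      proof -
        fix v assume vV: "v \<in> ?V"
        have "min (x v) (ennreal (?L v)) \<le> ennreal (?L v)" by simp
        thus "F x v \<le> ?L v" unfolding F_def using Lnn vV
          by (auto simp: enn2real_leI)
      qed
      have eq: "\<And>v. v \<in> ?V \<Longrightarrow> F x v = min (?L v) (r (F x) v)"
      proof -
        fix v assume v: "v \<in> ?V"
        have "F x v = enn2real (min (ennreal (r (F x) v)) (ennreal (?L v)))"
          using v xv[OF v] unfolding F_def by simp
        also have "\<dots> = min (r (F x) v) (?L v)"
          by (rule enn2real_min[OF rnn[OF v Fnn] Lnn])
        finally show "F x v = min (?L v) (r (F x) v)" by (simp add: min.commute)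
      qed
      have "F x \<in> (\<Pi>\<^sub>E v\<in>?V. {0 .. ?L v})"
        using bnd Fnn unfolding PiE_iff by (auto simp: F_def)
      then show "y \<in> EN_clearing_vectors ?V E s t l \<iota>"
        unfolding EN_clearing_vectors_def y
        using eq unfolding r_def by blast
    qed
    show "G ` EN_clearing_vectors ?V E s t l \<iota> \<subseteq> clearing_sections ?V E s t l \<iota>"
    proof
      fix y assume "y \<in> G ` EN_clearing_vectors ?V E s t l \<iota>"
      then obtain q where q: "q \<in> EN_clearing_vectors ?V E s t l \<iota>" and y: "y = G q" by auto
      have qnn: "\<And>w. w \<in> ?V \<Longrightarrow> 0 \<le> q w"
        using q unfolding EN_clearing_vectors_def by (auto simp: PiE_iff)
      have FG: "F (G q) = q"
      proof
        fix v show "F (G q) v = q v"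
        proof (cases "v \<in> ?V")
          case True
          have "F (G q) v = min (r q v) (?L v)"
            unfolding F_def G_def using True enn2real_min[OF rnn[OF True qnn] Lnn] by simp
          also have "\<dots> = q v" using q True unfolding EN_clearing_vectors_def r_def
            by (simp add: min.commute)
          finally show ?thesis .
        next
          case False
          thus ?thesis using q unfolding EN_clearing_vectors_def F_def
            by (auto simp: PiE_def extensional_def)
        qed
      qed
      show "y \<in> clearing_sections ?V E s t l \<iota>"
        unfolding clearing_sections_def y using PI[of _ "G q"] FG
        by (auto simp: G_def)
    qed
  qed
qed

end
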